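(* Let $q\ge 3$ be odd and $n\ge 1$. There exists a quasi-complementary Lee metric Gray code of $q$-ary $n$-tuples.
   Context: Lee distance between $v,u\in\mathbb{Z}_q^n$ is $\sum_{i}\min\{|v_i-u_i|,q-|v_i-u_i|\}$ (entries regarded as integers in $\{0,\ldots,q-1\}$). A quasi-complementary Lee metric Gray code of $q$-ary $n$-tuples is an ordering $G(0),\ldots,G(q^n-1)$ of all words of $\mathbb{Z}_q^n$ such that consecutive words $G(i),G(i+1)$ ($0\le i<q^n-1$) have Lee distance $1$ and $G((i+q^{n-1})\bmod q^n)=G(i)+(1,1,\ldots,1)$ for all $i$, with addition in $\mathbb{Z}_q^n$. *)

theory Defs
  imports Main
begin

definition words :: "nat \<Rightarrow> nat \<Rightarrow> (nat \<Rightarrow> nat) set" where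
  "words q n = {v. (\<forall>i<n. v i < q) \<and> (\<forall>i\<ge>n. v i = 0)}"

definition lee_dist :: "nat \<Rightarrow> nat \<Rightarrow> (nat \<Rightarrow> nat) \<Rightarrow> (nat \<Rightarrow> nat) \<Rightarrow> nat" where
  "lee_dist q n v u =
     (\<Sum>i<n. let d = (if v i \<ge> u i then v i - u i else u i - v i) in min d (q - d))"

definition add_ones :: "nat \<Rightarrow> nat \<Rightarrow> (nat \<Rightarrow> nat) \<Rightarrow> (nat \<Rightarrow> nat)" where
  "add_ones q n v = (\<lambda>i. if i < n then (v i + 1) mod q else 0)"

definition quasi_compl_lee_gray_code ::
  "nat \<Rightarrow> nat \<Rightarrow> (nat \<Rightarrow> (nat \<Rightarrow> nat)) \<Rightarrow> bool" where
  "quasi_compl_lee_gray_code q n G \<longleftrightarrow>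
     bij_betw G {0..<q ^ n} (words q n) \<and>
     (\<forall>i. i + 1 < q ^ n \<longrightarrow> lee_dist q n (G i) (G (i + 1)) = 1) \<and>
     (\<forall>i<q ^ n. G ((i + q ^ (n - 1)) mod q ^ n) = add_ones q n (G i))"

end

theory Submission
  imports Defs "HOL-Number_Theory.Cong"
begin

primrec V :: "nat \<Rightarrow> nat \<Rightarrow> nat \<Rightarrow> nat \<Rightarrow> nat" where
  "V q 0 i = (\<lambda>_. 0)"
| "V q (Suc m) i = (V q m (if even (i div q^m) then i mod q^m else q^m - 1 - i mod q^m))
     (m := (q - i div q^m) mod q)"

definition adj :: "nat \<Rightarrow> nat \<Rightarrow> (nat \<Rightarrow> nat) \<Rightarrow> (nat \<Rightarrow> nat) \<Rightarrow> bool" where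
  "adj q n v u \<longleftrightarrow> (\<exists>j<n. (\<forall>i. i \<noteq> j \<longrightarrow> v i = u i) \<and>
      (v j = Suc (u j) mod q \<or> u j = Suc (v j) mod q))"

lemma adj_sym: "adj q n v u \<Longrightarrow> adj q n u v"
  unfolding adj_def by metis

lemma adj_lee:
  assumes "adj q n v u" "v \<in> words q n" "u \<in> words q n" "q \<ge> 2"
  shows "lee_dist q n v u = 1"
proof -
  obtain j where j: "j < n" "\<forall>i. i \<noteq> j \<longrightarrow> v i = u i"
      "v j = Suc (u j) mod q \<or> u j = Suc (v j) mod q"
    using assms(1) unfolding adj_def by blast
  have vj: "v j < q" "u j < q" using assms(2,3) j(1) unfolding words_def by auto
  have "lee_dist q n v u = (\<Sum>i<n. if i = j then 1 else 0)"
    unfolding lee_dist_def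
  proof (rule sum.cong[OF refl])
    fix i assume "i \<in> {..<n}"
    show "(let d = if u i \<le> v i then v i - u i else u i - v i in min d (q - d)) =
      (if i = j then 1 else 0)"
    proof (cases "i = j")
      case True
      have "(v j = Suc (u j) \<and> Suc (u j) < q) \<or> (v j = 0 \<and> u j = q - 1) \<or>
            (u j = Suc (v j) \<and> Suc (v j) < q) \<or> (u j = 0 \<and> v j = q - 1)"
      proof -
        have a: "Suc x mod q = (if Suc x < q then Suc x else 0)" if "x < q" for x
        proof (cases "Suc x < q")
          case False
          then have "Suc x = q" using that by simp
          then show ?thesis by simp
        qed simp
        show ?thesis using j(3) vj a[of "u j"] a[of "v j"] by (auto split: if_splits)
      qed
      then show ?thesis using True assms(4) by (auto simp: Let_def)
    next
      case False
      then show ?thesis using j(2) by (simp add: Let_def)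
    qed
  qed
  also have "\<dots> = 1" using j(1) by simp
  finally show ?thesis .
qed

lemma V_words: "0 < q \<Longrightarrow> V q m i \<in> words q m"
proof (induction m arbitrary: i)
  case 0
  then show ?case by (simp add: words_def)
next
  case (Suc m)
  show ?case
    using Suc.IH[OF Suc.prems] Suc.prems unfolding words_def
    by (auto simp: less_Suc_eq)
qed

lemma V_zero: "V q m 0 = (\<lambda>_. 0)"
  by (induction m) auto

lemma V_Suc_N: "N = q^m \<Longrightarrow> V q (Suc m) i =
   (V q m (if even (i div N) then i mod N else N - 1 - i mod N))(m := (q - i div N) mod q)"
  by simp

lemma divmod_aux: "0 < (N::nat) \<Longrightarrow> r < N \<Longrightarrow> (k * N + r) div N = k \<and> (k * N + r) mod N = r"
  by (simp add: add.commute)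

lemma V_last:
  assumes "q \<ge> 2" "odd q"
  shows "V q m (q^m - 1) = (\<lambda>j. if j < m then 1 else 0)"
proof (induction m)
  case 0
  then show ?case by simp
next
  case (Suc m)
  define N where "N = (q::nat)^m"
  have N: "0 < N" using assms N_def by simp
  have e: "q^Suc m - 1 = (q - 1) * N + (N - 1)"
    using N assms unfolding N_def by (simp add: algebra_simps diff_mult_distrib)
  have d: "(q^Suc m - 1) div q^m = q - 1" "(q^Suc m - 1) mod q^m = q^m - 1"
    using divmod_aux[OF N, of "N - 1" "q - 1"] N e unfolding N_def by auto
  have ev: "even (q - 1)" using assms by simp
  have "(q - (q - 1)) mod q = 1" using assms by simp
  then show ?case using d ev Suc.IH by (auto simp: fun_eq_iff)
qed


lemma sub_mod_inj: "(k::nat) < q \<Longrightarrow> k' < q \<Longrightarrow> (q - k) mod q = (q - k') mod q \<Longrightarrow> k = k'"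
  by (cases "k = 0"; cases "k' = 0") auto

lemma V_inj:
  assumes "0 < q"
  shows "inj_on (V q m) {..<q^m}"
proof (induction m)
  case 0
  then show ?case by (auto intro: inj_onI)
next
  case (Suc m)
  define N where "N = (q::nat)^m"
  have N: "0 < N" using assms N_def by simp
  show ?case
  proof (rule inj_onI)
    fix i i' assume i: "i \<in> {..<q^Suc m}" and i': "i' \<in> {..<q^Suc m}"
      and eq: "V q (Suc m) i = V q (Suc m) i'"
    define k where "k = i div N"
    define r where "r = i mod N"
    define k' where "k' = i' div N"
    define r' where "r' = i' mod N"
    have kq: "k < q" "k' < q" using i i' unfolding k_def k'_def N_def
      by (auto simp: less_mult_imp_div_less mult.commute)
    have rN: "r < N" "r' < N" using N unfolding r_def r'_def by auto
    define x where "x = (if even k then r else N - 1 - r)"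
    define x' where "x' = (if even k' then r' else N - 1 - r')"
    have eq2: "(V q m x)(m := (q - k) mod q) = (V q m x')(m := (q - k') mod q)"
      using eq unfolding x_def x'_def k_def r_def k'_def r'_def N_def by simp
    have "(q - k) mod q = (q - k') mod q" using fun_cong[OF eq2, of m] by simp
    then have kk: "k = k'" using sub_mod_inj kq by blast
    have w: "V q m x \<in> words q m" "V q m x' \<in> words q m" using V_words assms by auto
    have "V q m x = V q m x'"
    proof
      fix j show "V q m x j = V q m x' j"
        using fun_cong[OF eq2, of j] w unfolding words_def by (cases "j = m") auto
    qed
    moreover have "x \<in> {..<q^m}" "x' \<in> {..<q^m}" using rN N unfolding x_def x'_def N_def by auto
    ultimately have "x = x'" using Suc.IH by (auto dest: inj_onD)
    then have "r = r'" using kk rN unfolding x_def x'_def by (auto split: if_splits)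
    then show "i = i'" using kk unfolding k_def k'_def r_def r'_def
      by (metis div_mult_mod_eq)
  qed
qed

lemma V_surj:
  assumes "0 < q"
  shows "w \<in> words q m \<Longrightarrow> \<exists>i<q^m. V q m i = w"
proof (induction m arbitrary: w)
  case 0
  then show ?case by (auto simp: words_def fun_eq_iff)
next
  case (Suc m)
  define N where "N = (q::nat)^m"
  have N: "0 < N" using assms N_def by simp
  have wm: "w m < q" using Suc.prems unfolding words_def by auto
  have "w(m := 0) \<in> words q m" using Suc.prems unfolding words_def by auto
  then obtain x where x: "x < N" "V q m x = w(m := 0)" using Suc.IH N_def by blast
  define k where "k = (q - w m) mod q"
  have kq: "k < q" using assms k_def by simp
  define r where "r = (if even k then x else N - 1 - x)"
  have rN: "r < N" using x N r_def by auto
  define i where "i = k * N + r"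
  have dm: "i div N = k" "i mod N = r" using divmod_aux[OF N rN] i_def by auto
  have xr: "(if even k then r else N - 1 - r) = x" using x r_def by auto
  have km: "(q - k) mod q = w m" using wm unfolding k_def
    by (cases "w m = 0") auto
  have "V q (Suc m) i = (V q m x)(m := w m)"
    unfolding V_Suc_N[OF N_def] dm xr km ..
  also have "\<dots> = w" using x(2) by (auto simp: fun_eq_iff)
  finally have "V q (Suc m) i = w" .
  moreover have "i < q^Suc m"
  proof -
    have "i < k * N + N" using i_def rN by simp
    also have "\<dots> = (k + 1) * N" by simp
    also have "\<dots> \<le> q * N" using kq by (intro mult_right_mono) auto
    finally show ?thesis by (simp add: N_def)
  qed
  ultimately show ?case by blast
qed


lemma adj_lift:
  assumes "adj q m v u" "v m = 0" "u m = 0"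
  shows "adj q (Suc m) (v(m := c)) (u(m := c))"
proof -
  obtain j where j: "j < m" "\<forall>i. i \<noteq> j \<longrightarrow> v i = u i"
      "v j = Suc (u j) mod q \<or> u j = Suc (v j) mod q"
    using assms(1) unfolding adj_def by blast
  have "j \<noteq> m" using j(1) by simp
  show ?thesis unfolding adj_def
    by (rule exI[of _ j]) (use j \<open>j \<noteq> m\<close> in auto)
qed

lemma V_adj:
  assumes "q \<ge> 2"
  shows "Suc i < q^m \<Longrightarrow> adj q m (V q m i) (V q m (Suc i))"
proof (induction m arbitrary: i)
  case 0
  then show ?case by simp
next
  case (Suc m)
  define N where "N = (q::nat)^m"
  have N: "0 < N" using assms N_def by simp
  define k where "k = i div N"
  define r where "r = i mod N"
  have rN: "r < N" using N r_def by simp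
  have iq: "Suc i < q * N" using Suc.prems N_def by simp
  have ieq: "i = k * N + r" using k_def r_def by simp
  have w0: "V q m y m = 0" for y using V_words[of q m y] assms unfolding words_def by auto
  have Vi: "V q (Suc m) i = (V q m (if even k then r else N - 1 - r))(m := (q - k) mod q)"
    unfolding V_Suc_N[OF N_def] k_def r_def ..
  show ?case
  proof (cases "Suc r < N")
    case True
    have dm: "Suc i div N = k" "Suc i mod N = Suc r"
      using divmod_aux[OF N True, of k] ieq by auto
    have Vi1: "V q (Suc m) (Suc i) = (V q m (if even k then Suc r else N - 1 - Suc r))(m := (q - k) mod q)"
      unfolding V_Suc_N[OF N_def] dm ..
    have "adj q m (V q m (if even k then r else N - 1 - r))
                    (V q m (if even k then Suc r else N - 1 - Suc r))"
    proof (cases "even k")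
      case True
      then show ?thesis using Suc.IH[of r] \<open>Suc r < N\<close> N_def by simp
    next
      case False
      have e: "N - 1 - r = Suc (N - 1 - Suc r)" using \<open>Suc r < N\<close> by simp
      have "adj q m (V q m (N - 1 - Suc r)) (V q m (Suc (N - 1 - Suc r)))"
        using Suc.IH[of "N - 1 - Suc r"] \<open>Suc r < N\<close> N_def by simp
      then show ?thesis using False e by (simp add: adj_sym)
    qed
    then show ?thesis unfolding Vi Vi1 by (intro adj_lift w0)
  next
    case False
    then have rr: "r = N - 1" using rN by simp
    have ieq2: "Suc i = Suc k * N + 0" using ieq rr N by simp
    have dm: "Suc i div N = Suc k" "Suc i mod N = 0"
      using divmod_aux[OF N N, of "Suc k"] ieq2 by auto
    have kq: "Suc k < q"
    proof (rule ccontr)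
      assume "\<not> Suc k < q"
      then have "q * N \<le> Suc k * N" by (intro mult_right_mono) auto
      then show False using ieq2 iq by simp
    qed
    have x: "(if even k then r else N - 1 - r) = (if even (Suc k) then 0 else N - 1 - 0)"
      using rr by auto
    have Vi1: "V q (Suc m) (Suc i) = (V q m (if even k then r else N - 1 - r))(m := (q - Suc k) mod q)"
      unfolding V_Suc_N[OF N_def] dm x ..
    have c: "(q - k) mod q = Suc ((q - Suc k) mod q) mod q"
    proof (cases "k = 0")
      case True
      then show ?thesis using kq by (simp add: Suc_diff_Suc)
    next
      case False
      then have "q - k = Suc (q - Suc k)" "q - k < q" using kq by auto
      then show ?thesis using kq by simp
    qed
    show ?thesis unfolding Vi Vi1 adj_def
      by (rule exI[of _ m]) (use c in auto)
  qed
qed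


lemma adj_trans_add:
  assumes "adj q m v u" "v \<in> words q m" "u \<in> words q m" "0 < q"
  shows "adj q (Suc m) (\<lambda>j. if j < Suc m then (c + v j) mod q else 0)
                       (\<lambda>j. if j < Suc m then (c + u j) mod q else 0)"
proof -
  obtain j where j: "j < m" "\<forall>i. i \<noteq> j \<longrightarrow> v i = u i"
      "v j = Suc (u j) mod q \<or> u j = Suc (v j) mod q"
    using assms(1) unfolding adj_def by blast
  have "(c + v j) mod q = Suc ((c + u j) mod q) mod q \<or> (c + u j) mod q = Suc ((c + v j) mod q) mod q"
    using j(3) by (auto simp: mod_simps)
  then show ?thesis unfolding adj_def
    by (intro exI[of _ j]) (use j in auto)
qed

theorem corollary2:
  fixes q n :: nat
  assumes "q \<ge> 3" and "odd q" and "n \<ge> 1"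
  shows "\<exists>G. quasi_compl_lee_gray_code q n G"
proof -
  obtain m where n: "n = Suc m" using assms(3) by (cases n) auto
  define N where "N = q^m"
  have q0: "0 < q" "q \<ge> 2" using assms by auto
  have N: "0 < N" using q0 N_def by simp
  have qn: "q^n = q * N" "q^(n-1) = N" using n N_def by auto
  define G where "G = (\<lambda>i j. if j < Suc m then (i div N + V q m (i mod N) j) mod q else (0::nat))"
  have Vw: "V q m y \<in> words q m" for y using V_words q0 by auto
  have Vlt: "V q m y j < q" for y j using Vw[of y] q0 unfolding words_def by (cases "j < m") auto
  have Vm: "V q m y j = 0" if "j \<ge> m" for y j using Vw[of y] that unfolding words_def by auto
  have Gw: "G i \<in> words q n" for i unfolding G_def words_def n using q0 by auto
  have kq: "i div N < q" if "i < q * N" for i using that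
    by (simp add: less_mult_imp_div_less mult.commute)
  have inj: "inj_on G {0..<q^n}"
  proof (rule inj_onI)
    fix i i' assume i: "i \<in> {0..<q^n}" and i': "i' \<in> {0..<q^n}" and eq: "G i = G i'"
    have k: "i div N < q" "i' div N < q" using i i' kq qn by auto
    have "(i div N) mod q = (i' div N) mod q" using fun_cong[OF eq, of m] Vm[of m] unfolding G_def by simp
    then have kk: "i div N = i' div N" using k by simp
    have "V q m (i mod N) = V q m (i' mod N)"
    proof
      fix j show "V q m (i mod N) j = V q m (i' mod N) j"
      proof (cases "j < m")
        case True
        have "(i div N + V q m (i mod N) j) mod q = (i div N + V q m (i' mod N) j) mod q"
          using fun_cong[OF eq, of j] True kk unfolding G_def by simp
        then have "V q m (i mod N) j mod q = V q m (i' mod N) j mod q"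
          using cong_add_lcancel_nat unfolding cong_def by blast
        then show ?thesis using Vlt by simp
      qed (simp add: Vm)
    qed
    moreover have "i mod N \<in> {..<q^m}" "i' mod N \<in> {..<q^m}" using N N_def by auto
    ultimately have "i mod N = i' mod N" using inj_onD[OF V_inj[OF q0(1), of m]] by blast
    then show "i = i'" using kk by (metis div_mult_mod_eq)
  qed
  have surj: "\<exists>i\<in>{0..<q^n}. G i = w" if w: "w \<in> words q n" for w
  proof -
    define k where "k = w m"
    have kq: "k < q" using w n unfolding words_def k_def by auto
    define v where "v = (\<lambda>j. if j < m then (w j + q - k) mod q else 0)"
    have "v \<in> words q m" using q0 unfolding v_def words_def by auto
    then obtain r where r: "r < N" "V q m r = v" using V_surj[OF q0(1)] N_def by blast
    define i where "i = k * N + r"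
    have dm: "i div N = k" "i mod N = r" using divmod_aux[OF N r(1)] i_def by auto
    have "i < k * N + N" using i_def r by simp
    also have "\<dots> = (k + 1) * N" by simp
    also have "\<dots> \<le> q * N" using kq by (intro mult_right_mono) auto
    finally have il: "i < q^n" using qn by simp
    have "G i = w"
    proof
      fix j
      show "G i j = w j"
      proof (cases "j < m")
        case True
        have wj: "w j < q" using w True n unfolding words_def by auto
        have "(k + (w j + q - k) mod q) mod q = (k + (w j + q - k)) mod q" by (simp add: mod_simps)
        also have "k + (w j + q - k) = w j + q" using kq by simp
        finally show ?thesis unfolding G_def dm r(2) v_def using True wj by simp
      next
        case False
        then show ?thesis using w n kq unfolding G_def dm r(2) v_def words_def k_def
          by (cases "j = m") auto
      qed
    qed
    then show ?thesis using il by auto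
  qed
  have bij: "bij_betw G {0..<q^n} (words q n)"
    unfolding bij_betw_def using inj Gw surj by blast
  have steps: "lee_dist q n (G i) (G (i + 1)) = 1" if i: "i + 1 < q^n" for i
  proof -
    define k where "k = i div N"
    define r where "r = i mod N"
    have rN: "r < N" using N r_def by simp
    have ieq: "i = k * N + r" using k_def r_def by simp
    have "adj q n (G i) (G (i + 1))"
    proof (cases "Suc r < N")
      case True
      have dm: "Suc i div N = k" "Suc i mod N = Suc r"
        using divmod_aux[OF N True, of k] ieq by auto
      have "adj q m (V q m r) (V q m (Suc r))" using V_adj[OF q0(2)] True N_def by simp
      have dm': "(i + 1) div N = k" "(i + 1) mod N = Suc r" using dm by auto
      show ?thesis unfolding G_def n dm' k_def[symmetric] r_def[symmetric]
        by (rule adj_trans_add) (use \<open>adj q m (V q m r) (V q m (Suc r))\<close> Vw q0 in auto)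
    next
      case False
      then have rr: "r = N - 1" using rN by simp
      have ieq2: "Suc i = Suc k * N + 0" using ieq rr N by simp
      have dm: "Suc i div N = Suc k" "Suc i mod N = 0"
        using divmod_aux[OF N N, of "Suc k"] ieq2 by auto
      have V1: "V q m r = (\<lambda>j. if j < m then 1 else 0)" using V_last[OF q0(2) assms(2)] rr N_def by simp
      have V0: "V q m 0 = (\<lambda>_. 0)" by (rule V_zero)
      show ?thesis unfolding adj_def G_def n
        by (rule exI[of _ m]) (auto simp: dm V1 V0 k_def[symmetric] r_def[symmetric] mod_simps)
    qed
    then show ?thesis using adj_lee Gw q0 by blast
  qed
  have shift: "G ((i + q^(n-1)) mod q^n) = add_ones q n (G i)" if i: "i < q^n" for i
  proof -
    define k where "k = i div N"
    define r where "r = i mod N"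
    have rN: "r < N" using N r_def by simp
    have ieq: "i = k * N + r" using k_def r_def by simp
    have k: "k < q" using kq i qn k_def by simp
    have dm: "((i + N) mod (q * N)) div N = Suc k mod q \<and> ((i + N) mod (q * N)) mod N = r"
    proof (cases "Suc k < q")
      case True
      have "i + N < q * N"
      proof -
        have "i + N = Suc k * N + r" using ieq by simp
        also have "\<dots> < Suc k * N + N" using rN by simp
        also have "\<dots> = Suc (Suc k) * N" by simp
        also have "\<dots> \<le> q * N" using True by (intro mult_right_mono) auto
        finally show ?thesis .
      qed
      then have "(i + N) mod (q * N) = Suc k * N + r" using ieq by simp
      then show ?thesis using divmod_aux[OF N rN, of "Suc k"] True by simp
    next
      case False
      then have kk: "Suc k = q" using k by simp
      have "i + N = q * N + r" using ieq kk by (simp add: algebra_simps flip: kk)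
      moreover have "N \<le> q * N" using q0 by simp
      then have "r < q * N" using rN by linarith
      ultimately have "(i + N) mod (q * N) = 0 * N + r" by simp
      then show ?thesis using divmod_aux[OF N rN, of 0] kk by simp
    qed
    have e: "(i + q^(n-1)) mod q^n = (i + N) mod (q * N)" using qn by simp
    define i2 where "i2 = (i + N) mod (q * N)"
    have dm2: "i2 div N = Suc k mod q" "i2 mod N = r" using dm i2_def by auto
    show ?thesis
      unfolding e i2_def[symmetric] unfolding G_def add_ones_def n dm2 k_def[symmetric] r_def[symmetric]
      by (auto simp: fun_eq_iff mod_simps)
  qed
  have "quasi_compl_lee_gray_code q n G"
    unfolding quasi_compl_lee_gray_code_def using bij steps shift by blast
  then show ?thesis by blast
qed

end
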